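(* Let $T$ be a tree on $N>2$ vertices with $M\ge 2$ leaves. Then $$R^+(T)\ge N(N-2)+2(N-1)\left[M+\frac{(N-M)^2}{2(N-1)-M}\right]-2(N-1).$$
   Context: For vertices $i,j$ of a connected graph $G$, $R_{ij}$ denotes the effective resistance between $i$ and $j$ when every edge is a unit resistor. The additive degree-Kirchhoff index is $R^+(G)=\sum_{i<j}(d_i+d_j)R_{ij}$, where $d_i$ is the degree of vertex $i$. *)

theory Defs
  imports Complex_Main
begin

definition simple_graph :: "'a set \<Rightarrow> ('a \<Rightarrow> 'a \<Rightarrow> bool) \<Rightarrow> bool" where
  "simple_graph V E \<longleftrightarrow> finite V \<and> (\<forall>x y. E x y \<longrightarrow> x \<in> V \<and> y \<in> V)
     \<and> (\<forall>x y. E x y \<longrightarrow> E y x) \<and> (\<forall>x. \<not> E x x)"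

definition connected_graph :: "'a set \<Rightarrow> ('a \<Rightarrow> 'a \<Rightarrow> bool) \<Rightarrow> bool" where
  "connected_graph V E \<longleftrightarrow> V \<noteq> {} \<and> (\<forall>x\<in>V. \<forall>y\<in>V. E\<^sup>*\<^sup>* x y)"

definition is_cycle :: "('a \<Rightarrow> 'a \<Rightarrow> bool) \<Rightarrow> 'a list \<Rightarrow> bool" where
  "is_cycle E cs \<longleftrightarrow> length cs \<ge> 3 \<and> distinct cs
     \<and> (\<forall>i. Suc i < length cs \<longrightarrow> E (cs ! i) (cs ! Suc i))
     \<and> E (last cs) (hd cs)"

definition is_tree :: "'a set \<Rightarrow> ('a \<Rightarrow> 'a \<Rightarrow> bool) \<Rightarrow> bool" where
  "is_tree V E \<longleftrightarrow> simple_graph V E \<and> connected_graph V E \<and> (\<nexists>cs. is_cycle E cs)"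

definition degree :: "'a set \<Rightarrow> ('a \<Rightarrow> 'a \<Rightarrow> bool) \<Rightarrow> 'a \<Rightarrow> nat" where
  "degree V E x = card {y\<in>V. E x y}"

definition leaves :: "'a set \<Rightarrow> ('a \<Rightarrow> 'a \<Rightarrow> bool) \<Rightarrow> 'a set" where
  "leaves V E = {x\<in>V. degree V E x = 1}"

text \<open>Effective resistance between i and j with unit resistors: inject a unit current
  at i and extract it at j; by Kirchhoff's laws the node potentials v satisfy
  \<open>\<Sum>_{l ~ k} (v k - v l) = [k=i] - [k=j]\<close> for all vertices k, and
  \<open>R_ij = v i - v j\<close> (independent of the choice of v in a connected graph).\<close>
definition eff_resistance :: "'a set \<Rightarrow> ('a \<Rightarrow> 'a \<Rightarrow> bool) \<Rightarrow> 'a \<Rightarrow> 'a \<Rightarrow> real" where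
  "eff_resistance V E i j = (THE r. \<exists>v :: 'a \<Rightarrow> real.
      (\<forall>k\<in>V. (\<Sum>l\<in>{l\<in>V. E k l}. v k - v l)
               = (if k = i then 1 else 0) - (if k = j then 1 else 0))
      \<and> r = v i - v j)"

definition additive_degree_kirchhoff :: "('a::linorder) set \<Rightarrow> ('a \<Rightarrow> 'a \<Rightarrow> bool) \<Rightarrow> real" where
  "additive_degree_kirchhoff V E =
     (\<Sum>(i,j)\<in>{(i,j). i \<in> V \<and> j \<in> V \<and> i < j}.
        real (degree V E i + degree V E j) * eff_resistance V E i j)"

end

theory Submission
  imports Defs
begin


definition sol :: "'a set \<Rightarrow> ('a \<Rightarrow> 'a \<Rightarrow> bool) \<Rightarrow> 'a \<Rightarrow> 'a \<Rightarrow> ('a \<Rightarrow> real) \<Rightarrow> bool" where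
  "sol V E i j v \<longleftrightarrow> (\<forall>k\<in>V. (\<Sum>l\<in>{l\<in>V. E k l}. v k - v l)
               = (if k = i then 1 else 0) - (if k = j then 1 else 0))"

lemma harmonic_const:
  assumes sg: "simple_graph V E" and cg: "connected_graph V E"
    and h: "\<forall>k\<in>V. (\<Sum>l\<in>{l\<in>V. E k l}. u k - u l) = (0::real)"
    and x: "x \<in> V" and y: "y \<in> V"
  shows "u x = u y"
proof -
  have fin: "finite V" using sg unfolding simple_graph_def by blast
  have ne: "V \<noteq> {}" using x by auto
  define mx where "mx = Max (u ` V)"
  obtain k0 where k0: "k0 \<in> V" "u k0 = mx"
  proof -
    have "mx \<in> u ` V" unfolding mx_def using fin ne by (intro Max_in) auto
    then show ?thesis using that by auto
  qed
  have le: "\<And>k. k \<in> V \<Longrightarrow> u k \<le> mx" unfolding mx_def using fin by auto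
  have nstep: "u l = mx" if "k \<in> V" "u k = mx" "E k l" for k l
  proof -
    have lV: "l \<in> V" using sg that(3) unfolding simple_graph_def by blast
    have s0: "(\<Sum>l\<in>{l\<in>V. E k l}. u k - u l) = 0" using h that(1) by blast
    have f0: "finite {l\<in>V. E k l}" using fin by simp
    have nn: "\<And>l'. l' \<in> {l\<in>V. E k l} \<Longrightarrow> 0 \<le> u k - u l'" using le that(2) by simp
    have "\<forall>l'\<in>{l\<in>V. E k l}. u k - u l' = 0"
      using sum_nonneg_eq_0_iff[OF f0 nn] s0 by simp
    then show ?thesis using lV that by auto
  qed
  have reach: "E\<^sup>*\<^sup>* k0 z \<Longrightarrow> z \<in> V \<and> u z = mx" for z
  proof (induction rule: rtranclp_induct)
    case base then show ?case using k0 by auto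
  next
    case (step a b)
    have "b \<in> V" using sg step(2) unfolding simple_graph_def by blast
    then show ?case using nstep[of a b] step by auto
  qed
  have "E\<^sup>*\<^sup>* k0 x" "E\<^sup>*\<^sup>* k0 y" using cg k0 x y by (auto simp: connected_graph_def)
  then show ?thesis using reach by auto
qed

lemma sol_unique:
  assumes "simple_graph V E" "connected_graph V E" "sol V E i j v" "sol V E i j w"
    "i \<in> V" "j \<in> V"
  shows "v i - v j = w i - w j"
proof -
  have "\<forall>k\<in>V. (\<Sum>l\<in>{l\<in>V. E k l}. (v k - w k) - (v l - w l)) = (0::real)"
  proof
    fix k assume k: "k \<in> V"
    have "(\<Sum>l\<in>{l\<in>V. E k l}. (v k - w k) - (v l - w l))
       = (\<Sum>l\<in>{l\<in>V. E k l}. v k - v l) - (\<Sum>l\<in>{l\<in>V. E k l}. w k - w l)"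
      unfolding sum_subtractf[symmetric] by (rule sum.cong) auto
    then show "(\<Sum>l\<in>{l\<in>V. E k l}. (v k - w k) - (v l - w l)) = 0"
      using assms(3,4) k by (simp add: sol_def)
  qed
  from harmonic_const[OF assms(1,2) this assms(5,6)] show ?thesis by simp
qed

lemma eff_res_eq:
  assumes "simple_graph V E" "connected_graph V E" "sol V E i j v" "i \<in> V" "j \<in> V"
  shows "eff_resistance V E i j = v i - v j"
  unfolding eff_resistance_def sol_def[symmetric]
proof (rule the_equality)
  show "\<exists>w. sol V E i j w \<and> v i - v j = w i - w j" using assms(3) by auto
next
  fix r assume "\<exists>w. sol V E i j w \<and> r = w i - w j"
  then show "r = v i - v j" using sol_unique[OF assms(1,2) _ assms(3,4,5)] by auto
qed


lemma tree_leaf: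
  assumes tr: "is_tree V E" and c2: "card V \<ge> 2"
  shows "\<exists>t p. t \<in> V \<and> p \<in> V \<and> t \<noteq> p \<and> {l\<in>V. E t l} = {p}"
proof -
  have sg: "simple_graph V E" and cg: "connected_graph V E" and nc: "\<nexists>cs. is_cycle E cs"
    using tr by (auto simp: is_tree_def)
  have fin: "finite V" and inV: "\<And>x y. E x y \<Longrightarrow> x \<in> V \<and> y \<in> V"
    and sym: "\<And>x y. E x y \<Longrightarrow> E y x" and irr: "\<And>x. \<not> E x x"
    using sg unfolding simple_graph_def by blast+
  define P where "P cs \<longleftrightarrow> distinct cs \<and> set cs \<subseteq> V \<and> length cs \<ge> 2 \<and>
      (\<forall>i. Suc i < length cs \<longrightarrow> E (cs!i) (cs!Suc i))" for cs
  obtain x y where xy: "x \<in> V" "y \<in> V" "x \<noteq> y"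
  proof -
    have "\<exists>x\<in>V. \<exists>y\<in>V. x \<noteq> y"
    proof (rule ccontr)
      assume "\<not> ?thesis"
      then have "\<forall>x\<in>V. \<forall>y\<in>V. x = y" by auto
      then have "card V \<le> 1" using card_le_Suc0_iff_eq[OF fin] by auto
      then show False using c2 by auto
    qed
    then show ?thesis using that by auto
  qed
  have "E\<^sup>*\<^sup>* x y" using cg xy by (auto simp: connected_graph_def)
  then obtain z where z: "E x z"
    using xy(3) by (metis converse_rtranclpE)
  have "P [x, z]" using z inV irr unfolding P_def by (auto simp: less_Suc_eq)
  have bnd: "length cs \<le> card V" if "P cs" for cs
  proof -
    have "length cs = card (set cs)" using that distinct_card unfolding P_def by metis
    also have "\<dots> \<le> card V" using that fin card_mono unfolding P_def by metis
    finally show ?thesis .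
  qed
  obtain n where n: "\<exists>cs. P cs \<and> length cs = n" "\<forall>m. (\<exists>cs. P cs \<and> length cs = m) \<longrightarrow> m \<le> n"
    using Nat.ex_has_greatest_nat[of "\<lambda>m. \<exists>cs. P cs \<and> length cs = m" 2 "card V"]
      \<open>P [x,z]\<close> bnd by (metis length_Cons list.size(3) numeral_2_eq_2 One_nat_def)
  obtain cs where cs: "P cs" "length cs = n" using n(1) by auto
  have maxl: "length ys \<le> length cs" if "P ys" for ys using n(2) cs that by auto
  have n2: "n \<ge> 2" using cs unfolding P_def by auto
  define t where "t = cs ! (n-1)"
  define q where "q = cs ! (n-2)"
  have qt: "E q t"
  proof -
    have "Suc (n-2) < length cs" using cs n2 by auto
    moreover have "Suc (n-2) = n - 1" using n2 by auto
    ultimately show ?thesis using cs unfolding P_def t_def q_def by metis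
  qed
  have tV: "t \<in> V" and qV: "q \<in> V" using inV qt by auto
  have tq: "t \<noteq> q" using qt irr by auto
  have "{l\<in>V. E t l} = {q}"
  proof
    show "{q} \<subseteq> {l\<in>V. E t l}" using qt sym qV by auto
  next
    show "{l\<in>V. E t l} \<subseteq> {q}"
    proof
      fix l assume "l \<in> {l\<in>V. E t l}"
      then have lV: "l \<in> V" and tl: "E t l" by auto
      show "l \<in> {q}"
      proof (cases "l \<in> set cs")
        case False
        have "P (cs @ [l])"
          unfolding P_def
        proof (intro conjI allI impI)
          show "distinct (cs @ [l])" using False cs unfolding P_def by auto
          show "set (cs @ [l]) \<subseteq> V" using lV cs unfolding P_def by auto
          show "2 \<le> length (cs @ [l])" using n2 cs by auto
          fix i assume i: "Suc i < length (cs @ [l])"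
          show "E ((cs @ [l]) ! i) ((cs @ [l]) ! Suc i)"
          proof (cases "Suc i < n")
            case True
            then show ?thesis using cs unfolding P_def by (auto simp: nth_append)
          next
            case False
            then have "i = n - 1" using i cs by auto
            then show ?thesis using cs n2 tl unfolding t_def by (auto simp: nth_append)
          qed
        qed
        from maxl[OF this] show ?thesis by simp
      next
        case True
        then obtain k where k: "k < n" "cs ! k = l" using cs by (auto simp: in_set_conv_nth)
        have dist: "distinct cs" using cs unfolding P_def by auto
        have "k \<noteq> n - 1" using k tl irr unfolding t_def by auto
        show ?thesis
        proof (cases "k = n - 2")
          case True then show ?thesis using k q_def by auto
        next
          case False
          then have kl: "k + 3 \<le> n" using k \<open>k \<noteq> n - 1\<close> by auto
          have "is_cycle E (drop k cs)"
            unfolding is_cycle_def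
          proof (intro conjI allI impI)
            show "3 \<le> length (drop k cs)" using kl cs by auto
            show "distinct (drop k cs)" using dist by auto
            fix i assume "Suc i < length (drop k cs)"
            then have "Suc (k+i) < length cs" by auto
            then have "E (cs ! (k+i)) (cs ! Suc (k+i))" using cs unfolding P_def by blast
            then show "E (drop k cs ! i) (drop k cs ! Suc i)"
              using kl cs by simp
          next
            have "last (drop k cs) = t" using k cs n2 unfolding t_def
              by (simp add: last_conv_nth)
            moreover have "hd (drop k cs) = l" using k cs hd_drop_conv_nth by metis
            ultimately show "E (last (drop k cs)) (hd (drop k cs))" using tl by simp
          qed
          then show ?thesis using nc by auto
        qed
      qed
    qed
  qed
  then show ?thesis using tV qV tq by blast
qed



lemma tree_remove:
  assumes tr: "is_tree V E" and t: "t \<in> V" and p: "p \<in> V" "t \<noteq> p"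
    and nb: "{l\<in>V. E t l} = {p}"
  shows "is_tree (V - {t}) (\<lambda>x y. E x y \<and> x \<noteq> t \<and> y \<noteq> t)"
proof -
  have sg: "simple_graph V E" and cg: "connected_graph V E" and nc: "\<nexists>cs. is_cycle E cs"
    using tr unfolding is_tree_def by blast+
  have fin: "finite V" and inV: "\<And>x y. E x y \<Longrightarrow> x \<in> V \<and> y \<in> V"
    and sym: "\<And>x y. E x y \<Longrightarrow> E y x" and irr: "\<And>x. \<not> E x x"
    using sg unfolding simple_graph_def by blast+
  define E' where "E' = (\<lambda>x y. E x y \<and> x \<noteq> t \<and> y \<noteq> t)"
  have tN: "E t y \<longleftrightarrow> y = p" for y using nb inV by blast
  have tN2: "E y t \<longleftrightarrow> y = p" for y using tN sym by blast
  have "simple_graph (V - {t}) E'"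
    unfolding simple_graph_def E'_def using fin inV sym irr by blast
  moreover have "connected_graph (V - {t}) E'"
  proof -
    have key: "E\<^sup>*\<^sup>* x y \<Longrightarrow> x \<noteq> t \<Longrightarrow> (y \<noteq> t \<longrightarrow> E'\<^sup>*\<^sup>* x y) \<and> (y = t \<longrightarrow> E'\<^sup>*\<^sup>* x p)" for x y
    proof (induction rule: rtranclp_induct)
      case base then show ?case by auto
    next
      case (step z y)
      show ?case
      proof (cases "z = t")
        case True
        then have "y = p" using step(2) tN by blast
        then show ?thesis using step True p by auto
      next
        case False
        show ?thesis
        proof (cases "y = t")
          case True
          then have "z = p" using step(2) tN2 by blast
          then show ?thesis using step False True by auto
        next
          case yF: False
          then have "E' z y" using step(2) False unfolding E'_def by blast
          then show ?thesis using step False yF by (meson rtranclp.rtrancl_into_rtrancl)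
        qed
      qed
    qed
    show ?thesis unfolding connected_graph_def
    proof (intro conjI ballI)
      show "V - {t} \<noteq> {}" using p by blast
      fix x y assume "x \<in> V - {t}" "y \<in> V - {t}"
      then show "E'\<^sup>*\<^sup>* x y" using key[of x y] cg unfolding connected_graph_def by blast
    qed
  qed
  moreover have "\<nexists>cs. is_cycle E' cs"
  proof
    assume "\<exists>cs. is_cycle E' cs"
    then obtain cs where "is_cycle E' cs" by blast
    then have "is_cycle E cs" unfolding is_cycle_def E'_def by blast
    then show False using nc by blast
  qed
  ultimately show ?thesis unfolding is_tree_def E'_def by blast
qed

lemma adj_deg:
  assumes tr: "is_tree V E" and e: "E i j"
  shows "degree V E i + degree V E j \<le> card V"
proof -
  have sg: "simple_graph V E" and nc: "\<nexists>cs. is_cycle E cs"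
    using tr unfolding is_tree_def by blast+
  have fin: "finite V" and inV: "\<And>x y. E x y \<Longrightarrow> x \<in> V \<and> y \<in> V"
    and sym: "\<And>x y. E x y \<Longrightarrow> E y x" and irr: "\<And>x. \<not> E x x"
    using sg unfolding simple_graph_def by blast+
  have disj: "{y\<in>V. E i y} \<inter> {y\<in>V. E j y} = {}"
  proof (rule ccontr)
    assume "\<not> ?thesis"
    then obtain w where w: "E i w" "E j w" by blast
    have "is_cycle E [i, j, w]"
      unfolding is_cycle_def
    proof (intro conjI allI impI)
      show "3 \<le> length [i, j, w]" by simp
      show "distinct [i, j, w]" using w e irr by auto
      fix k assume "Suc k < length [i, j, w]"
      then have "k = 0 \<or> k = 1" by auto
      then show "E ([i, j, w] ! k) ([i, j, w] ! Suc k)" using e w by auto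
    next
      show "E (last [i, j, w]) (hd [i, j, w])" using w sym by simp
    qed
    then show False using nc by blast
  qed
  have "degree V E i + degree V E j = card ({y\<in>V. E i y} \<union> {y\<in>V. E j y})"
    unfolding degree_def using disj fin by (simp add: card_Un_disjoint)
  also have "\<dots> \<le> card V" using fin by (intro card_mono) auto
  finally show ?thesis .
qed



definition rr :: "'a \<Rightarrow> 'a \<Rightarrow> 'a \<Rightarrow> real" where
  "rr i j k = (if k = i then 1 else 0) - (if k = j then 1 else 0)"

lemma sol_rr: "sol V E i j v \<longleftrightarrow> (\<forall>k\<in>V. (\<Sum>l\<in>{l\<in>V. E k l}. v k - v l) = rr i j k)"
  unfolding sol_def rr_def by simp

lemma sol_extend:
  assumes sg: "simple_graph V E" and t: "t \<in> V" and p: "p \<in> V" "t \<noteq> p"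
    and nb: "{l\<in>V. E t l} = {p}"
    and s: "sol (V - {t}) (\<lambda>x y. E x y \<and> x \<noteq> t \<and> y \<noteq> t) i' j' v'"
    and c1: "\<forall>k\<in>V - {t} - {p}. rr i' j' k = rr i j k"
    and c2: "rr i' j' p - c = rr i j p" and c3: "c = rr i j t"
  shows "sol V E i j (v'(t := v' p + c))"
proof -
  have inV: "\<And>x y. E x y \<Longrightarrow> x \<in> V \<and> y \<in> V"
    and sym: "\<And>x y. E x y \<Longrightarrow> E y x" and irr: "\<And>x. \<not> E x x"
    and fin: "finite V"
    using sg unfolding simple_graph_def by blast+
  define E' where "E' = (\<lambda>x y. E x y \<and> x \<noteq> t \<and> y \<noteq> t)"
  define v where "v = v'(t := v' p + c)"
  have tN: "E t y \<longleftrightarrow> y = p" for y using nb inV by blast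
  have tN2: "E y t \<longleftrightarrow> y = p" for y using tN sym by blast
  have s': "\<forall>k\<in>V - {t}. (\<Sum>l\<in>{l\<in>V - {t}. E' k l}. v' k - v' l) = rr i' j' k"
    using s unfolding sol_rr E'_def by blast
  have "\<forall>k\<in>V. (\<Sum>l\<in>{l\<in>V. E k l}. v k - v l) = rr i j k"
  proof
    fix k assume k: "k \<in> V"
    show "(\<Sum>l\<in>{l\<in>V. E k l}. v k - v l) = rr i j k"
    proof (cases "k = t")
      case True
      then have "(\<Sum>l\<in>{l\<in>V. E k l}. v k - v l) = v t - v p" using nb by simp
      also have "\<dots> = c" unfolding v_def using p by simp
      finally show ?thesis using c3 True by simp
    next
      case kt: False
      show ?thesis
      proof (cases "k = p")
        case True
        have set: "{l\<in>V. E k l} = insert t {l\<in>V - {t}. E' k l}"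
          using True tN2[of k] t kt unfolding E'_def by blast
        have fin': "finite {l\<in>V - {t}. E' k l}" using fin by simp
        have "(\<Sum>l\<in>{l\<in>V. E k l}. v k - v l) = (v k - v t) + (\<Sum>l\<in>{l\<in>V - {t}. E' k l}. v k - v l)"
          unfolding set using fin' by (subst sum.insert) auto
        also have "(\<Sum>l\<in>{l\<in>V - {t}. E' k l}. v k - v l) = (\<Sum>l\<in>{l\<in>V - {t}. E' k l}. v' k - v' l)"
          using kt unfolding v_def by (intro sum.cong) auto
        also have "\<dots> = rr i' j' p" using s' True p by auto
        also have "v k - v t = - c" unfolding v_def using True p by simp
        finally show ?thesis using c2 True by simp
      next
        case False
        have set: "{l\<in>V. E k l} = {l\<in>V - {t}. E' k l}"
          using False kt tN2 unfolding E'_def by auto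
        have "(\<Sum>l\<in>{l\<in>V. E k l}. v k - v l) = (\<Sum>l\<in>{l\<in>V - {t}. E' k l}. v' k - v' l)"
          unfolding set using kt unfolding v_def by (intro sum.cong) auto
        also have "\<dots> = rr i' j' k" using s' k kt by auto
        also have "\<dots> = rr i j k" using c1 k kt False by auto
        finally show ?thesis .
      qed
    qed
  qed
  then show ?thesis unfolding sol_rr v_def by blast
qed



lemma tree_main:
  "is_tree V E \<Longrightarrow> (\<forall>i\<in>V. \<forall>j\<in>V. i \<noteq> j \<longrightarrow>
      (\<exists>v. sol V E i j v \<and> v i - v j \<ge> (if E i j then 1 else 2)))
    \<and> (\<Sum>k\<in>V. degree V E k) = 2 * (card V - 1)"
proof (induction "card V" arbitrary: V E rule: less_induct)
  case less
  have tr: "is_tree V E" by fact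
  have sg: "simple_graph V E" and cg: "connected_graph V E"
    using tr unfolding is_tree_def by blast+
  have fin: "finite V" and inV: "\<And>x y. E x y \<Longrightarrow> x \<in> V \<and> y \<in> V"
    and sym: "\<And>x y. E x y \<Longrightarrow> E y x" and irr: "\<And>x. \<not> E x x"
    using sg unfolding simple_graph_def by blast+
  have ne: "V \<noteq> {}" using cg unfolding connected_graph_def by blast
  show ?case
  proof (cases "card V \<ge> 2")
    case False
    moreover have "card V > 0" using fin ne by (simp add: card_gt_0_iff)
    ultimately have "card V = 1" by linarith
    then obtain x where Vx: "V = {x}" by (auto simp: card_1_singleton_iff)
    have "degree V E x = 0" unfolding degree_def Vx using irr by simp
    then show ?thesis using Vx by simp
  next
    case True
    obtain t p where t: "t \<in> V" and p: "p \<in> V" "t \<noteq> p" and nb: "{l\<in>V. E t l} = {p}"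
      using tree_leaf[OF tr True] by (elim exE conjE) (rule that)
    define E' where "E' = (\<lambda>x y. E x y \<and> x \<noteq> t \<and> y \<noteq> t)"
    define V' where "V' = V - {t}"
    have tr': "is_tree V' E'" unfolding V'_def E'_def by (rule tree_remove[OF tr t p nb])
    have cV': "card V' = card V - 1" unfolding V'_def using t fin by simp
    have lt: "card V' < card V" using cV' True by simp
    have IH: "(\<forall>i\<in>V'. \<forall>j\<in>V'. i \<noteq> j \<longrightarrow>
      (\<exists>v. sol V' E' i j v \<and> v i - v j \<ge> (if E' i j then 1 else 2)))
      \<and> (\<Sum>k\<in>V'. degree V' E' k) = 2 * (card V' - 1)"
      using less.hyps[OF lt tr'] .
    have tN: "E t y \<longleftrightarrow> y = p" for y using nb inV by blast
    have tN2: "E y t \<longleftrightarrow> y = p" for y using tN sym by blast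
    have pV': "p \<in> V'" unfolding V'_def using p by blast
    have ext: "sol V E i j (v'(t := v' p + c))"
      if "sol V' E' i' j' v'" "\<forall>k\<in>V - {t} - {p}. rr i' j' k = rr i j k"
        "rr i' j' p - c = rr i j p" "c = rr i j t" for i j i' j' v' c
      using sol_extend[OF sg t p nb _ that(2,3,4)] that(1) unfolding V'_def E'_def by blast
    have zero: "sol V' E' p p (\<lambda>_. 0)" unfolding sol_def by simp
    have part1: "\<forall>i\<in>V. \<forall>j\<in>V. i \<noteq> j \<longrightarrow>
      (\<exists>v. sol V E i j v \<and> v i - v j \<ge> (if E i j then 1 else 2))"
    proof (intro ballI impI)
      fix i j assume i: "i \<in> V" and j: "j \<in> V" and ij: "i \<noteq> j"
      show "\<exists>v. sol V E i j v \<and> v i - v j \<ge> (if E i j then 1 else 2)"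
      proof (cases "i = t")
        case it: True
        show ?thesis
        proof (cases "j = p")
          case True
          have "sol V E i j ((\<lambda>_. 0)(t := 0 + 1))"
            by (rule ext[OF zero]) (use it True p in \<open>auto simp: rr_def\<close>)
          moreover have "E i j" using it True tN by simp
          ultimately show ?thesis using it True p by (intro exI[of _ "(\<lambda>_. 0)(t := 0 + 1)"]) auto
        next
          case False
          have jV': "j \<in> V'" using j ij it unfolding V'_def by blast
          obtain v' where v': "sol V' E' p j v'" "v' p - v' j \<ge> (if E' p j then 1 else 2)"
            using IH pV' jV' False by metis
          have "sol V E i j (v'(t := v' p + 1))"
            by (rule ext[OF v'(1)]) (use it False p ij in \<open>auto simp: rr_def\<close>)
          moreover have "v' p - v' j \<ge> 1" using v'(2) by (auto split: if_splits)
          ultimately show ?thesis using it ij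
            by (intro exI[of _ "v'(t := v' p + 1)"]) auto
        qed
      next
        case itF: False
        show ?thesis
        proof (cases "j = t")
          case jt: True
          show ?thesis
          proof (cases "i = p")
            case True
            have "sol V E i j ((\<lambda>_. 0)(t := 0 + (-1)))"
              by (rule ext[OF zero]) (use jt True p in \<open>auto simp: rr_def\<close>)
            moreover have "E i j" using jt True tN2 by simp
            ultimately show ?thesis using jt True p by (intro exI[of _ "(\<lambda>_. 0)(t := 0 + (-1))"]) auto
          next
            case False
            have iV': "i \<in> V'" using i itF unfolding V'_def by blast
            obtain v' where v': "sol V' E' i p v'" "v' i - v' p \<ge> (if E' i p then 1 else 2)"
              using IH pV' iV' False by metis
            have "sol V E i j (v'(t := v' p + (-1)))"
              by (rule ext[OF v'(1)]) (use jt False p ij itF in \<open>auto simp: rr_def\<close>)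
            moreover have "v' i - v' p \<ge> 1" using v'(2) by (auto split: if_splits)
            ultimately show ?thesis using jt itF
              by (intro exI[of _ "v'(t := v' p + (-1))"]) auto
          qed
        next
          case jtF: False
          have iV': "i \<in> V'" "j \<in> V'" using i j itF jtF unfolding V'_def by blast+
          obtain v' where v': "sol V' E' i j v'" "v' i - v' j \<ge> (if E' i j then 1 else 2)"
            using IH iV' ij by metis
          have "sol V E i j (v'(t := v' p + 0))"
            by (rule ext[OF v'(1)]) (use jtF itF in \<open>auto simp: rr_def\<close>)
          moreover have "E' i j \<longleftrightarrow> E i j" unfolding E'_def using itF jtF by blast
          ultimately show ?thesis using v'(2) itF jtF
            by (intro exI[of _ "v'(t := v' p + 0)"]) auto
        qed
      qed
    qed
    have dsame: "degree V E k = degree V' E' k" if "k \<in> V'" "k \<noteq> p" for k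
    proof -
      have "{l\<in>V. E k l} = {l\<in>V'. E' k l}"
        using that tN2[of k] unfolding V'_def E'_def by blast
      then show ?thesis unfolding degree_def by simp
    qed
    have dp: "degree V E p = degree V' E' p + 1"
    proof -
      have set: "{l\<in>V. E p l} = insert t {l\<in>V'. E' p l}"
        using tN2[of p] t p unfolding V'_def E'_def by blast
      have "t \<notin> {l\<in>V'. E' p l}" unfolding V'_def by blast
      moreover have "finite {l\<in>V'. E' p l}" using fin unfolding V'_def by simp
      ultimately show ?thesis unfolding degree_def set by simp
    qed
    have dt: "degree V E t = 1" unfolding degree_def nb by simp
    have finV': "finite V'" using fin unfolding V'_def by simp
    have A: "(\<Sum>k\<in>V. degree V E k) = degree V E t + (\<Sum>k\<in>V'. degree V E k)"
      unfolding V'_def using fin t by (simp add: sum.remove)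
    have B: "(\<Sum>k\<in>V'. degree V E k) = degree V E p + (\<Sum>k\<in>V' - {p}. degree V E k)"
      using finV' pV' by (simp add: sum.remove)
    have C: "(\<Sum>k\<in>V' - {p}. degree V E k) = (\<Sum>k\<in>V' - {p}. degree V' E' k)"
      using dsame by (intro sum.cong) auto
    have D: "(\<Sum>k\<in>V'. degree V' E' k) = degree V' E' p + (\<Sum>k\<in>V' - {p}. degree V' E' k)"
      using finV' pV' by (simp add: sum.remove)
    have "(\<Sum>k\<in>V. degree V E k) = 2 + (\<Sum>k\<in>V'. degree V' E' k)"
      using A B C D dt dp by simp
    also have "\<dots> = 2 * (card V - 1)" using IH cV' True lt pV' finV'
      by (metis (no_types, lifting) Suc_1 Suc_diff_1 card_gt_0_iff diff_Suc_1 equals0D mult_Suc_right nat_mult_1_right neq0_conv One_nat_def add_2_eq_Suc)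
    finally show ?thesis using part1 by blast
  qed
qed



lemma arith_final:
  fixes N M :: real
  assumes N3: "N \<ge> 3" and M2: "2 \<le> M" and MN: "M \<le> N - 1"
  shows "N * (N - 2) + 2 * (N - 1) * (M + (N - M)^2 / (2 * (N - 1) - M)) - 2 * (N - 1)
     \<le> (3 * N - 4) * (N - 1)"
proof -
  define t where "t = 2 * (N - 1) - M"
  have tge: "t \<ge> N - 1" using MN unfolding t_def by simp
  have tpos: "t > 0" using tge N3 by simp
  have NM: "N - M = t - (N - 2)" unfolding t_def by simp
  have "(N - M)^2 / t = t - 2 * (N - 2) + (N - 2)^2 / t"
    unfolding NM using tpos by (simp add: field_simps power2_eq_square)
  then have eq: "M + (N - M)^2 / t = 2 + (N - 2)^2 / t" unfolding t_def by simp
  have le: "(N - 2)^2 / t \<le> (N - 2)^2 / (N - 1)"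
    using tge N3 by (intro divide_left_mono) auto
  have "(N - 1) * ((N - 2)^2 / t) \<le> (N - 1) * ((N - 2)^2 / (N - 1))"
    using le N3 by (intro mult_left_mono) auto
  also have "\<dots> = (N - 2)^2" using N3 by simp
  finally have X: "(N - 1) * ((N - 2)^2 / t) \<le> (N - 2)^2" .
  have "N * (N - 2) + 2 * (N - 1) * (M + (N - M)^2 / (2 * (N - 1) - M)) - 2 * (N - 1)
      = N * (N - 2) + 4 * (N - 1) + 2 * ((N - 1) * ((N - 2)^2 / t)) - 2 * (N - 1)"
    using eq unfolding t_def[symmetric] by (simp add: algebra_simps)
  also have "\<dots> \<le> N * (N - 2) + 4 * (N - 1) + 2 * (N - 2)^2 - 2 * (N - 1)" using X by simp
  also have "\<dots> \<le> (3 * N - 4) * (N - 1)" using N3 by (simp add: algebra_simps power2_eq_square)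
  finally show ?thesis .
qed

lemma res_bound:
  assumes tr: "is_tree V E" and "i \<in> V" "j \<in> V" "i \<noteq> j"
  shows "eff_resistance V E i j \<ge> (if E i j then 1 else 2)"
proof -
  have sg: "simple_graph V E" and cg: "connected_graph V E"
    using tr unfolding is_tree_def by blast+
  obtain v where v: "sol V E i j v" "v i - v j \<ge> (if E i j then 1 else 2)"
    using conjunct1[OF tree_main[OF tr]] assms(2-4) by blast
  have "eff_resistance V E i j = v i - v j" by (rule eff_res_eq[OF sg cg v(1) assms(2,3)])
  then show ?thesis using v(2) by simp
qed



theorem corollary4:
  fixes V :: "'a::linorder set" and E :: "'a \<Rightarrow> 'a \<Rightarrow> bool"
  assumes "is_tree V E"
    and "card V > 2"
    and "card (leaves V E) \<ge> 2"
  shows "let N = real (card V); M = real (card (leaves V E)) in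
     N * (N - 2) + 2 * (N - 1) * (M + (N - M)^2 / (2 * (N - 1) - M)) - 2 * (N - 1)
       \<le> additive_degree_kirchhoff V E"
proof -
  have tr: "is_tree V E" by fact
  have sg: "simple_graph V E" using tr unfolding is_tree_def by blast
  have fin: "finite V" and inV: "\<And>x y. E x y \<Longrightarrow> x \<in> V \<and> y \<in> V"
    and sym: "\<And>x y. E x y \<Longrightarrow> E y x" and irr: "\<And>x. \<not> E x x"
    using sg unfolding simple_graph_def by blast+
  define d where "d k = real (degree V E k)" for k
  define N where "N = real (card V)"
  define S where "S = (\<Sum>k\<in>V. d k)"
  have Snat: "(\<Sum>k\<in>V. degree V E k) = 2 * (card V - 1)"
    using conjunct2[OF tree_main[OF tr]] .
  have SN: "S = 2 * (N - 1)"
  proof -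
    have "S = real (\<Sum>k\<in>V. degree V E k)" unfolding S_def d_def by simp
    also have "\<dots> = 2 * (N - 1)" unfolding Snat N_def using assms(2) by (simp add: of_nat_diff)
    finally show ?thesis .
  qed
  have N3: "N \<ge> 3" unfolding N_def using assms(2) by simp
  define g where "g i j = (d i + d j) * (if E i j then 1 else 2)" for i j
  define D where "D = {(i,j). i \<in> V \<and> j \<in> V \<and> i < j}"
  have finD: "finite D" unfolding D_def
    by (rule finite_subset[of _ "V \<times> V"]) (use fin in auto)
  have step1: "(\<Sum>(i,j)\<in>D. g i j) \<le> additive_degree_kirchhoff V E"
    unfolding additive_degree_kirchhoff_def D_def[symmetric]
  proof (rule sum_mono)
    fix x assume "x \<in> D"
    then obtain i j where x: "x = (i, j)" "i \<in> V" "j \<in> V" "i < j" unfolding D_def by blast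
    have "(if E i j then 1 else 2) \<le> eff_resistance V E i j"
      using res_bound[OF tr x(2,3)] x(4) by simp
    then have "(d i + d j) * (if E i j then 1 else 2) \<le> (d i + d j) * eff_resistance V E i j"
      by (intro mult_left_mono) (auto simp: d_def)
    then show "(case x of (i, j) \<Rightarrow> g i j) \<le>
      (case x of (i, j) \<Rightarrow> real (degree V E i + degree V E j) * eff_resistance V E i j)"
      unfolding x g_def d_def by simp
  qed
  have gsym: "g i j = g j i" for i j unfolding g_def using sym by (auto simp: algebra_simps)
  have OD: "Sigma V (\<lambda>i. V - {i}) = D \<union> prod.swap ` D"
    unfolding D_def by (auto simp: neq_iff)
  have disj: "D \<inter> prod.swap ` D = {}" unfolding D_def by auto
  have sw: "(\<Sum>x\<in>prod.swap ` D. case x of (i, j) \<Rightarrow> g i j) = (\<Sum>x\<in>D. case x of (i, j) \<Rightarrow> g i j)"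
  proof -
    have "(\<Sum>x\<in>prod.swap ` D. case x of (i, j) \<Rightarrow> g i j)
        = (\<Sum>x\<in>D. case prod.swap x of (i, j) \<Rightarrow> g i j)"
      by (subst sum.reindex) (auto simp: comp_def)
    also have "\<dots> = (\<Sum>x\<in>D. case x of (i, j) \<Rightarrow> g i j)"
      by (intro sum.cong) (auto simp: gsym)
    finally show ?thesis .
  qed
  have step2: "2 * (\<Sum>(i,j)\<in>D. g i j) = (\<Sum>i\<in>V. \<Sum>j\<in>V - {i}. g i j)"
  proof -
    have "(\<Sum>i\<in>V. \<Sum>j\<in>V - {i}. g i j) = (\<Sum>(i,j)\<in>Sigma V (\<lambda>i. V - {i}). g i j)"
      using fin by (subst sum.Sigma) auto
    also have "\<dots> = (\<Sum>(i,j)\<in>D. g i j) + (\<Sum>(i,j)\<in>prod.swap ` D. g i j)"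
      unfolding OD using finD disj by (subst sum.union_disjoint) auto
    finally show ?thesis using sw by simp
  qed
  have step3: "(\<Sum>j\<in>V - {i}. g i j) \<ge> (N - 4) * d i + 2 * S" if i: "i \<in> V" for i
  proof -
    have split: "g i j = 2 * (d i + d j) - (if E i j then d i + d j else 0)" for j
      unfolding g_def by simp
    have nbr: "{j\<in>V - {i}. E i j} = {j\<in>V. E i j}" using irr by auto
    have nbr2: "{j. j \<in> V \<and> j \<noteq> i \<and> E i j} = {j\<in>V. E i j}" using irr by auto
    have s1: "(\<Sum>j\<in>V - {i}. 2 * (d i + d j)) = 2 * ((N - 1) * d i + (S - d i))"
    proof -
      have "(\<Sum>j\<in>V - {i}. 2 * (d i + d j)) = 2 * ((\<Sum>j\<in>V - {i}. d i) + (\<Sum>j\<in>V - {i}. d j))"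
        by (simp add: sum.distrib sum_distrib_left)
      also have "(\<Sum>j\<in>V - {i}. d i) = (N - 1) * d i"
        using fin i assms(2) unfolding N_def by (simp add: of_nat_diff)
      also have "(\<Sum>j\<in>V - {i}. d j) = S - d i"
        unfolding S_def using fin i by (simp add: sum_diff1)
      finally show ?thesis .
    qed
    have s2: "(\<Sum>j\<in>V - {i}. (if E i j then d i + d j else 0)) \<le> N * d i"
    proof -
      have "(\<Sum>j\<in>V - {i}. (if E i j then d i + d j else 0)) = (\<Sum>j\<in>{j\<in>V. E i j}. d i + d j)"
        using fin by (simp add: sum.inter_filter[symmetric] nbr nbr2)
      also have "\<dots> \<le> (\<Sum>j\<in>{j\<in>V. E i j}. N)"
      proof (rule sum_mono)
        fix j assume "j \<in> {j\<in>V. E i j}"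
        then have "degree V E i + degree V E j \<le> card V" using adj_deg[OF tr] by blast
        then show "d i + d j \<le> N" unfolding d_def N_def
          by (metis of_nat_add of_nat_le_iff)
      qed
      also have "\<dots> = N * d i" unfolding d_def degree_def by simp
      finally show ?thesis .
    qed
    have "(\<Sum>j\<in>V - {i}. g i j) = (\<Sum>j\<in>V - {i}. 2 * (d i + d j)) - (\<Sum>j\<in>V - {i}. (if E i j then d i + d j else 0))"
      unfolding split by (simp add: sum_subtractf)
    then show ?thesis using s1 s2 by (simp add: algebra_simps)
  qed
  have "(\<Sum>i\<in>V. \<Sum>j\<in>V - {i}. g i j) \<ge> (\<Sum>i\<in>V. (N - 4) * d i + 2 * S)"
    using step3 by (intro sum_mono) auto
  also have "(\<Sum>i\<in>V. (N - 4) * d i + 2 * S) = (N - 4) * S + N * (2 * S)"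
    unfolding S_def N_def by (simp add: sum.distrib sum_distrib_left)
  finally have "2 * (\<Sum>(i,j)\<in>D. g i j) \<ge> (N - 4) * S + N * (2 * S)" using step2 by simp
  then have low: "(\<Sum>(i,j)\<in>D. g i j) \<ge> (3 * N - 4) * (N - 1)" using SN by (simp add: algebra_simps)
  define M where "M = real (card (leaves V E))"
  have M2: "M \<ge> 2" unfolding M_def using assms(3) by simp
  have MN: "M \<le> N - 1"
  proof (rule ccontr)
    assume "\<not> M \<le> N - 1"
    then have "card (leaves V E) \<ge> card V" unfolding M_def N_def by linarith
    moreover have sub: "leaves V E \<subseteq> V" unfolding leaves_def by auto
    ultimately have "leaves V E = V" using fin by (meson card_seteq)
    then have "\<forall>k\<in>V. degree V E k = 1" unfolding leaves_def by blast
    then have "(\<Sum>k\<in>V. degree V E k) = card V" by simp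
    then show False using Snat assms(2) by simp
  qed
  have "N * (N - 2) + 2 * (N - 1) * (M + (N - M)^2 / (2 * (N - 1) - M)) - 2 * (N - 1)
     \<le> (3 * N - 4) * (N - 1)" by (rule arith_final[OF N3 M2 MN])
  also have "\<dots> \<le> additive_degree_kirchhoff V E" using low step1 by linarith
  finally show ?thesis unfolding Let_def N_def M_def .
qed


end
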